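(* Every finite connected graph that is both geodetic and ptolemaic is diagonal.
   Context: $d$ denotes shortest-path distance. A graph is geodetic if between any two vertices there is exactly one shortest path. It is ptolemaic if $d(x,y)d(z,w)+d(y,z)d(x,w)\ge d(x,z)d(y,w)$ for all vertices $x,y,z,w$. For vertices $x_0,\dots,x_k$ put $\ell(x_0,\dots,x_k)=\sum_{i=0}^{k-1}d(x_i,x_{i+1})$. The magnitude chain complex: $\mathrm{MC}_{k,l}(G)$ is the free abelian group on $I_{k,l}(G)=\{(x_0,\dots,x_k)\in V(G)^{k+1}: x_i\neq x_{i+1}\ \forall i,\ \ell=l\}$, with differential $\partial=\sum_{i=1}^{k-1}(-1)^i\partial_i$, where $\partial_i$ deletes $x_i$ if this does not change $\ell$ and is $0$ otherwise. Magnitude homology: $\mathrm{MH}_{k,l}(G)=H_k(\mathrm{MC}_{*,l}(G))$. $G$ is diagonal if $\mathrm{MH}_{k,l}(G)=0$ whenever $k\ne l$. *)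

theory Defs
  imports Main
begin

definition simple_graph :: "'a set \<Rightarrow> ('a \<Rightarrow> 'a \<Rightarrow> bool) \<Rightarrow> bool" where
  "simple_graph V E \<longleftrightarrow> (\<forall>x y. E x y \<longrightarrow> x \<in> V \<and> y \<in> V \<and> x \<noteq> y \<and> E y x)"

text \<open>A walk is a nonempty vertex list whose consecutive entries are adjacent;
its length (number of edges) is length p - 1.\<close>

definition walk :: "'a set \<Rightarrow> ('a \<Rightarrow> 'a \<Rightarrow> bool) \<Rightarrow> 'a list \<Rightarrow> bool" where
  "walk V E p \<longleftrightarrow> p \<noteq> [] \<and> set p \<subseteq> V \<and> (\<forall>i. Suc i < length p \<longrightarrow> E (p ! i) (p ! Suc i))"

definition connected_graph :: "'a set \<Rightarrow> ('a \<Rightarrow> 'a \<Rightarrow> bool) \<Rightarrow> bool" where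
  "connected_graph V E \<longleftrightarrow> (\<forall>x\<in>V. \<forall>y\<in>V. \<exists>p. walk V E p \<and> hd p = x \<and> last p = y)"

definition gdist :: "'a set \<Rightarrow> ('a \<Rightarrow> 'a \<Rightarrow> bool) \<Rightarrow> 'a \<Rightarrow> 'a \<Rightarrow> nat" where
  "gdist V E x y = (LEAST n. \<exists>p. walk V E p \<and> hd p = x \<and> last p = y \<and> length p = Suc n)"

definition shortest_path :: "'a set \<Rightarrow> ('a \<Rightarrow> 'a \<Rightarrow> bool) \<Rightarrow> 'a \<Rightarrow> 'a \<Rightarrow> 'a list \<Rightarrow> bool" where
  "shortest_path V E x y p \<longleftrightarrow>
     walk V E p \<and> hd p = x \<and> last p = y \<and> length p = Suc (gdist V E x y)"

definition geodetic :: "'a set \<Rightarrow> ('a \<Rightarrow> 'a \<Rightarrow> bool) \<Rightarrow> bool" where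
  "geodetic V E \<longleftrightarrow> (\<forall>x\<in>V. \<forall>y\<in>V. \<exists>!p. shortest_path V E x y p)"

definition ptolemaic :: "'a set \<Rightarrow> ('a \<Rightarrow> 'a \<Rightarrow> bool) \<Rightarrow> bool" where
  "ptolemaic V E \<longleftrightarrow> (\<forall>x\<in>V. \<forall>y\<in>V. \<forall>z\<in>V. \<forall>w\<in>V.
      gdist V E x y * gdist V E z w + gdist V E y z * gdist V E x w
        \<ge> gdist V E x z * gdist V E y w)"

text \<open>Length of a tuple (x_0,...,x_k), represented as a list of length k+1.\<close>

definition tlen :: "'a set \<Rightarrow> ('a \<Rightarrow> 'a \<Rightarrow> bool) \<Rightarrow> 'a list \<Rightarrow> nat" where
  "tlen V E t = (\<Sum>i<length t - 1. gdist V E (t ! i) (t ! Suc i))"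

definition gens :: "'a set \<Rightarrow> ('a \<Rightarrow> 'a \<Rightarrow> bool) \<Rightarrow> nat \<Rightarrow> nat \<Rightarrow> 'a list set" where
  "gens V E k l = {t. length t = Suc k \<and> set t \<subseteq> V \<and>
       (\<forall>i. Suc i < length t \<longrightarrow> t ! i \<noteq> t ! Suc i) \<and> tlen V E t = l}"

text \<open>Elements of the free abelian group MC_{k,l}(G) on gens k l: integer-valued
functions supported in gens k l (finite, since V is finite).\<close>

definition mchain :: "'a set \<Rightarrow> ('a \<Rightarrow> 'a \<Rightarrow> bool) \<Rightarrow> nat \<Rightarrow> nat \<Rightarrow> ('a list \<Rightarrow> int) \<Rightarrow> bool" where
  "mchain V E k l c \<longleftrightarrow> (\<forall>t. c t \<noteq> 0 \<longrightarrow> t \<in> gens V E k l)"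

definition del_at :: "nat \<Rightarrow> 'a list \<Rightarrow> 'a list" where
  "del_at i t = take i t @ drop (Suc i) t"

definition mbdry :: "'a set \<Rightarrow> ('a \<Rightarrow> 'a \<Rightarrow> bool) \<Rightarrow> nat \<Rightarrow> nat \<Rightarrow> ('a list \<Rightarrow> int) \<Rightarrow> 'a list \<Rightarrow> int" where
  "mbdry V E k l c s = (\<Sum>t\<in>gens V E k l. c t *
       (\<Sum>i\<in>{1..<k}. (-1) ^ i *
          (if del_at i t = s \<and> tlen V E (del_at i t) = tlen V E t then 1 else 0)))"

definition MH_zero :: "'a set \<Rightarrow> ('a \<Rightarrow> 'a \<Rightarrow> bool) \<Rightarrow> nat \<Rightarrow> nat \<Rightarrow> bool" where
  "MH_zero V E k l \<longleftrightarrow>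
     (\<forall>c. mchain V E k l c \<and> mbdry V E k l c = (\<lambda>_. 0) \<longrightarrow>
        (\<exists>b. mchain V E (Suc k) l b \<and> mbdry V E (Suc k) l b = c))"

definition diagonal :: "'a set \<Rightarrow> ('a \<Rightarrow> 'a \<Rightarrow> bool) \<Rightarrow> bool" where
  "diagonal V E \<longleftrightarrow> (\<forall>k l. k \<noteq> l \<longrightarrow> MH_zero V E k l)"

end

theory Submission
  imports Defs
begin

locale GG =
  fixes V :: "'a set" and E :: "'a \<Rightarrow> 'a \<Rightarrow> bool"
  assumes finV: "finite V" and sg: "simple_graph V E" and conn: "connected_graph V E"
    and geo: "geodetic V E" and pto: "ptolemaic V E"
begin

abbreviation d where "d \<equiv> gdist V E"

lemma walk_single[simp]: "walk V E [x] \<longleftrightarrow> x \<in> V"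
  by (auto simp: walk_def)

lemma walk_Cons2[simp]: "walk V E (x # y # p) \<longleftrightarrow> x \<in> V \<and> E x y \<and> walk V E (y # p)"
proof
  assume "walk V E (x # y # p)"
  then show "x \<in> V \<and> E x y \<and> walk V E (y # p)"
    unfolding walk_def by (auto dest: spec[where x="Suc _"] spec[where x=0])
next
  assume a: "x \<in> V \<and> E x y \<and> walk V E (y # p)"
  show "walk V E (x # y # p)" unfolding walk_def
  proof (intro conjI allI impI)
    fix i assume "Suc i < length (x # y # p)"
    then show "E ((x # y # p) ! i) ((x # y # p) ! Suc i)"
      using a unfolding walk_def by (cases i) auto
  qed (use a in \<open>auto simp: walk_def\<close>)
qed

lemma walk_join: "walk V E p \<Longrightarrow> walk V E q \<Longrightarrow> last p = hd q \<Longrightarrow> walk V E (p @ tl q)"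
proof (induction p rule: induct_list012)
  case 1 then show ?case by (simp add: walk_def)
next
  case (2 x) then show ?case by (cases q) auto
next
  case (3 x y zs) then show ?case by auto
qed

lemma walk_nonempty: "walk V E p \<Longrightarrow> p \<noteq> []" by (simp add: walk_def)

lemma walk_set: "walk V E p \<Longrightarrow> set p \<subseteq> V" by (simp add: walk_def)

lemma walk_rev: "walk V E p \<Longrightarrow> walk V E (rev p)"
proof (induction p rule: induct_list012)
  case (3 x y zs)
  have "walk V E (rev (y # zs))" using 3 by simp
  moreover have "walk V E [y, x]" using 3 sg unfolding simple_graph_def by auto
  ultimately have "walk V E (rev (y#zs) @ tl [y,x])"
    by (intro walk_join) auto
  then show ?case by simp
qed auto

lemma dist_witness:
  assumes "x \<in> V" "y \<in> V"
  shows "\<exists>p. walk V E p \<and> hd p = x \<and> last p = y \<and> length p = Suc (d x y)"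
proof -
  obtain p where p: "walk V E p" "hd p = x" "last p = y"
    using conn assms unfolding connected_graph_def by blast
  then have "\<exists>n p. walk V E p \<and> hd p = x \<and> last p = y \<and> length p = Suc n"
    by (intro exI[of _ "length p - 1"] exI[of _ p]) (auto simp: walk_def)
  then show ?thesis unfolding gdist_def by (rule LeastI_ex)
qed

lemma dist_le: "walk V E p \<Longrightarrow> hd p = x \<Longrightarrow> last p = y \<Longrightarrow> d x y \<le> length p - 1"
  unfolding gdist_def
  by (rule Least_le) (auto simp: walk_def)

lemma dist_self[simp]: "x \<in> V \<Longrightarrow> d x x = 0"
  using dist_le[of "[x]" x x] by simp

lemma dist_zero: "x \<in> V \<Longrightarrow> y \<in> V \<Longrightarrow> d x y = 0 \<Longrightarrow> x = y"
  using dist_witness[of x y] by (auto simp: length_Suc_conv)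

lemma dist_sym: assumes "x \<in> V" "y \<in> V" shows "d x y = d y x"
proof -
  have le: "d a b \<le> d b a" if ab: "a \<in> V" "b \<in> V" for a b
  proof -
    obtain p where p: "walk V E p" "hd p = b" "last p = a" "length p = Suc (d b a)"
      using dist_witness[of b a] ab by blast
    have "d a b \<le> length (rev p) - 1"
      using p walk_nonempty[OF p(1)] by (intro dist_le) (auto simp: walk_rev hd_rev last_rev)
    then show ?thesis using p by simp
  qed
  show ?thesis using le[OF assms] le[OF assms(2,1)] by simp
qed

lemma dist_tri: assumes "x \<in> V" "y \<in> V" "z \<in> V" shows "d x z \<le> d x y + d y z"
proof -
  obtain p where p: "walk V E p" "hd p = x" "last p = y" "length p = Suc (d x y)"
    using dist_witness assms by blast
  obtain q where q: "walk V E q" "hd q = y" "last q = z" "length q = Suc (d y z)"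
    using dist_witness assms by blast
  have w: "walk V E (p @ tl q)" using p q by (intro walk_join) auto
  have "last (p @ tl q) = z"
    using p q by (cases q) (auto simp: last_append)
  moreover have "hd (p @ tl q) = x" using p walk_nonempty[OF p(1)] by simp
  ultimately have "d x z \<le> length (p @ tl q) - 1" using w by (intro dist_le) auto
  then show ?thesis using p q by simp
qed

lemma dist_one_edge: assumes "x \<in> V" "y \<in> V" "d x y = 1" shows "E x y"
proof -
  obtain p where p: "walk V E p" "hd p = x" "last p = y" "length p = 2"
    using dist_witness assms by fastforce
  then obtain a b where "p = [a,b]" by (auto simp: length_Suc_conv numeral_2_eq_2)
  then show ?thesis using p by auto
qed

lemma edge_dist: assumes "E x y" shows "d x y = 1" "x \<in> V" "y \<in> V" "x \<noteq> y"
proof -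
  show xy: "x \<in> V" "y \<in> V" "x \<noteq> y" using assms sg unfolding simple_graph_def by auto
  have "d x y \<le> 1" using dist_le[of "[x,y]" x y] assms xy by simp
  moreover have "d x y \<noteq> 0" using dist_zero xy by blast
  ultimately show "d x y = 1" by simp
qed

definition btw where "btw x y z \<longleftrightarrow> d x y + d y z = d x z"

lemma ptolemy_lemma:
  assumes V: "P \<in> V" "Q \<in> V" "R \<in> V" "S \<in> V"
    and b1: "btw P Q R" and b2: "btw Q R S" and ne: "Q \<noteq> R"
  shows "d P S = d P Q + d Q R + d R S"
proof -
  define a where "a = d P Q"
  define b where "b = d Q R"
  define e where "e = d R S"
  define c where "c = d P S"
  have pt: "a * e + b * c \<ge> (a + b) * (b + e)"
    using pto V b1 b2 unfolding ptolemaic_def btw_def a_def b_def c_def e_def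
    by (metis (no_types, lifting))
  have bpos: "b > 0" using dist_zero[OF V(2,3)] ne unfolding b_def by auto
  have "b * c \<ge> b * (a + b + e)" using pt by (simp add: algebra_simps)
  then have "c \<ge> a + b + e" using bpos by simp
  moreover have "c \<le> a + b + e"
    using dist_tri[OF V(1,3,4)] b1 unfolding btw_def a_def b_def c_def e_def by simp
  ultimately show ?thesis unfolding a_def b_def c_def e_def by simp
qed


definition nx where "nx a b = (THE y. y \<in> V \<and> d a y = 1 \<and> d y b + 1 = d a b)"

lemma nx_unique:
  assumes "a \<in> V" "b \<in> V"
    and y1: "y1 \<in> V" "d a y1 = 1" "d y1 b + 1 = d a b"
    and y2: "y2 \<in> V" "d a y2 = 1" "d y2 b + 1 = d a b"
  shows "y1 = y2"
proof -
  obtain q1 where q1: "walk V E q1" "hd q1 = y1" "last q1 = b" "length q1 = Suc (d y1 b)"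
    using dist_witness assms y1 by blast
  obtain q2 where q2: "walk V E q2" "hd q2 = y2" "last q2 = b" "length q2 = Suc (d y2 b)"
    using dist_witness assms y2 by blast
  have e1: "E a y1" using dist_one_edge assms y1 by blast
  have e2: "E a y2" using dist_one_edge assms y2 by blast
  have sp: "shortest_path V E a b (a # q)" if qq: "walk V E q" "hd q = y" "last q = b"
     "length q = Suc (d y b)" "E a y" "d y b + 1 = d a b" for q y
  proof -
    obtain r where r: "q = y # r" using qq(1,2) by (cases q) (auto simp: walk_def)
    show ?thesis unfolding shortest_path_def using qq r assms
      by (auto simp: walk_def[of V E "[]"])
  qed
  have "a # q1 = a # q2"
    using geo assms sp[OF q1 e1 y1(3)] sp[OF q2 e2 y2(3)] unfolding geodetic_def by blast
  then show ?thesis using q1 q2 by simp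
qed

lemma nx_exists:
  assumes "a \<in> V" "b \<in> V" "a \<noteq> b"
  shows "\<exists>y. y \<in> V \<and> d a y = 1 \<and> d y b + 1 = d a b"
proof -
  obtain p where p: "walk V E p" "hd p = a" "last p = b" "length p = Suc (d a b)"
    using dist_witness assms by blast
  have "d a b \<noteq> 0" using dist_zero assms by blast
  then obtain y r where pr: "p = a # y # r" using p
    by (cases p; cases "tl p") auto
  have w: "walk V E (y # r)" "E a y" using p pr by auto
  have ey: "d a y = 1" "y \<in> V" using edge_dist[OF w(2)] by auto
  have "d y b \<le> length (y # r) - 1" using w p pr by (intro dist_le) auto
  then have "d y b + 1 \<le> d a b" using p pr by simp
  moreover have "d a b \<le> d a y + d y b" using dist_tri assms ey by blast
  ultimately show ?thesis using ey by (intro exI[of _ y]) auto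
qed

lemma nx:
  assumes "a \<in> V" "b \<in> V" "a \<noteq> b"
  shows "nx a b \<in> V" "d a (nx a b) = 1" "d (nx a b) b + 1 = d a b"
proof -
  obtain y where y: "y \<in> V \<and> d a y = 1 \<and> d y b + 1 = d a b" using nx_exists assms by blast
  have "nx a b = y" unfolding nx_def
    by (rule the_equality) (use y nx_unique assms in blast)+
  then show "nx a b \<in> V" "d a (nx a b) = 1" "d (nx a b) b + 1 = d a b" using y by auto
qed

lemma nx_eq:
  assumes "a \<in> V" "b \<in> V" "y \<in> V" "d a y = 1" "d y b + 1 = d a b"
  shows "nx a b = y"
proof -
  have "a \<noteq> b" using assms by auto
  then show ?thesis using nx[OF assms(1,2)] nx_unique[OF assms(1,2)] assms by metis
qed

lemma nx_btw:
  assumes "a \<in> V" "b \<in> V" "a \<noteq> b"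
  shows "btw a (nx a b) b" "nx a b \<noteq> a" "d a b \<ge> 2 \<Longrightarrow> nx a b \<noteq> b"
  using nx[OF assms] assms unfolding btw_def by auto

lemma btw_sub:
  assumes "P \<in> V" "Q \<in> V" "R \<in> V" "S \<in> V" "btw P Q S" "btw Q R S"
  shows "btw P Q R"
  using assms dist_tri[of P Q R] dist_tri[of P R S] unfolding btw_def by linarith

lemma nx_extend:
  assumes "a \<in> V" "b \<in> V" "c \<in> V" "a \<noteq> b" "btw a b c"
  shows "nx a c = nx a b"
proof -
  define y where "y = nx a b"
  have y: "y \<in> V" "d a y = 1" "d y b + 1 = d a b" using nx[OF assms(1,2,4)] y_def by auto
  have "d y c \<le> d y b + d b c" using dist_tri y assms by blast
  moreover have "d a c \<le> d a y + d y c" using dist_tri y assms by blast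
  ultimately have "d y c + 1 = d a c" using y assms(5) unfolding btw_def by linarith
  then show ?thesis unfolding y_def[symmetric] using nx_eq assms y by blast
qed

lemma nx_edge:
  assumes "a \<in> V" "b \<in> V" "c \<in> V" "d a b = 1" "btw a b c"
  shows "nx a c = b"
  using nx_eq assms unfolding btw_def by simp


fun pl where "pl (x # y # zs) = d x y + pl (y # zs)" | "pl _ = 0"

lemma tlen_pl: "tlen V E t = pl t"
proof (induction t rule: pl.induct)
  case (1 x y zs)
  have "tlen V E (x # y # zs) = (\<Sum>i<Suc (length zs). d ((x # y # zs) ! i) ((x # y # zs) ! Suc i))"
    by (simp add: tlen_def)
  also have "\<dots> = d x y + (\<Sum>i<length zs. d ((y # zs) ! i) ((y # zs) ! Suc i))"
    by (subst sum.lessThan_Suc_shift) simp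
  also have "\<dots> = d x y + tlen V E (y # zs)" by (simp add: tlen_def)
  finally show ?case using 1 by simp
qed (auto simp: tlen_def)

lemma pl_append: "pl (xs @ y # ys) = pl (xs @ [y]) + pl (y # ys)"
  by (induction xs rule: induct_list012) auto

lemma decomp3:
  assumes "1 \<le> i" "Suc i < length u"
  shows "u = take (i - 1) u @ u ! (i - 1) # u ! i # u ! Suc i # drop (Suc (Suc i)) u"
    and "del_at i u = take (i - 1) u @ u ! (i - 1) # u ! Suc i # drop (Suc (Suc i)) u"
proof -
  have dr: "drop (i - 1) u = u ! (i - 1) # u ! i # u ! Suc i # drop (Suc (Suc i)) u"
  proof -
    have "drop (i - 1) u = u ! (i - 1) # drop i u"
      using assms Cons_nth_drop_Suc[of "i - 1" u] by simp
    also have "drop i u = u ! i # drop (Suc i) u" using assms Cons_nth_drop_Suc[of i u] by simp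
    also have "drop (Suc i) u = u ! Suc i # drop (Suc (Suc i)) u" using assms Cons_nth_drop_Suc[of "Suc i" u] by simp
    finally show ?thesis .
  qed
  show "u = take (i - 1) u @ u ! (i - 1) # u ! i # u ! Suc i # drop (Suc (Suc i)) u"
    using dr by (metis append_take_drop_id)
  have tk: "take i u = take (i - 1) u @ [u ! (i - 1)]"
    using assms take_Suc_conv_app_nth[of "i - 1" u] by simp
  have "drop (Suc i) u = u ! Suc i # drop (Suc (Suc i)) u"
    using assms by (simp add: Cons_nth_drop_Suc)
  then show "del_at i u = take (i - 1) u @ u ! (i - 1) # u ! Suc i # drop (Suc (Suc i)) u"
    unfolding del_at_def using tk by simp
qed

lemma tlen_del:
  assumes "1 \<le> i" "Suc i < length u"
  shows "tlen V E (del_at i u) + d (u ! (i - 1)) (u ! i) + d (u ! i) (u ! Suc i)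
       = tlen V E u + d (u ! (i - 1)) (u ! Suc i)"
proof -
  define xs where "xs = take (i - 1) u"
  define ys where "ys = drop (Suc (Suc i)) u"
  define a where "a = u ! (i - 1)"
  define b where "b = u ! i"
  define c where "c = u ! Suc i"
  have u: "u = xs @ a # b # c # ys"
    and du: "del_at i u = xs @ a # c # ys"
    using decomp3[OF assms] unfolding xs_def ys_def a_def b_def c_def by auto
  have 1: "pl (xs @ a # b # c # ys) = pl (xs @ [a]) + (d a b + (d b c + pl (c # ys)))"
    by (subst pl_append) simp
  have 2: "pl (xs @ a # c # ys) = pl (xs @ [a]) + (d a c + pl (c # ys))"
    by (subst pl_append) simp
  show ?thesis unfolding tlen_pl a_def[symmetric] b_def[symmetric] c_def[symmetric]
    using 1 2 u du by simp
qed

definition okd where "okd i t \<longleftrightarrow> tlen V E (del_at i t) = tlen V E t"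

lemma okd_iff:
  assumes "1 \<le> i" "Suc i < length u"
  shows "okd i u \<longleftrightarrow> btw (u ! (i - 1)) (u ! i) (u ! Suc i)"
  using tlen_del[OF assms] unfolding okd_def btw_def by linarith

definition ins :: "nat \<Rightarrow> 'a \<Rightarrow> 'a list \<Rightarrow> 'a list" where
  "ins i y t = take i t @ y # drop i t"

lemma length_del[simp]: "i < length t \<Longrightarrow> length (del_at i t) = length t - 1"
  by (simp add: del_at_def)

lemma nth_del: "i < length t \<Longrightarrow> j < length t - 1 \<Longrightarrow>
    del_at i t ! j = (if j < i then t ! j else t ! Suc j)"
  by (auto simp: del_at_def nth_append min_def)

lemma length_ins[simp]: "i \<le> length t \<Longrightarrow> length (ins i y t) = Suc (length t)"
  by (simp add: ins_def)

lemma nth_ins: "i \<le> length t \<Longrightarrow> j \<le> length t \<Longrightarrow>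
    ins i y t ! j = (if j < i then t ! j else if j = i then y else t ! (j - 1))"
proof -
  assume a: "i \<le> length t" "j \<le> length t"
  consider "j < i" | "j = i" | "i < j" by linarith
  then show ?thesis
  proof cases
    case 3
    then obtain m where m: "j = Suc (i + m)" by (metis less_iff_Suc_add)
    then show ?thesis using a by (simp add: ins_def nth_append min_def)
  qed (use a in \<open>auto simp: ins_def nth_append min_def\<close>)
qed

lemma del_ins: "i \<le> length t \<Longrightarrow> del_at i (ins i y t) = t"
  by (simp add: del_at_def ins_def)

lemma ins_del: "i < length t \<Longrightarrow> ins i (t ! i) (del_at i t) = t"
  by (simp add: del_at_def ins_def min_def Cons_nth_drop_Suc)

lemma del_ins_swap:
  assumes "i0 \<le> i" "i < length t"
  shows "del_at (Suc i) (ins i0 y t) = ins i0 y (del_at i t)"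
proof (rule nth_equalityI)
  show "length (del_at (Suc i) (ins i0 y t)) = length (ins i0 y (del_at i t))"
    using assms by simp
  fix j assume "j < length (del_at (Suc i) (ins i0 y t))"
  then have j: "j < length t" using assms by simp
  have l1: "i0 \<le> length t - 1" using assms by simp
  consider "j < i0" | "j = i0" | "i0 < j" "j \<le> i" | "i < j" by linarith
  then show "del_at (Suc i) (ins i0 y t) ! j = ins i0 y (del_at i t) ! j"
  proof cases
    case 1 then show ?thesis using assms j l1 by (simp add: nth_del nth_ins)
  next
    case 2 then show ?thesis using assms j l1 by (simp add: nth_del nth_ins)
  next
    case 3 then have "j - Suc 0 < i" by linarith
    then show ?thesis using 3 assms j l1 by (simp add: nth_del nth_ins)
  next
    case 4 then have "\<not> j - Suc 0 < i" by linarith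
    then show ?thesis using 4 assms j l1 by (simp add: nth_del nth_ins)
  qed
qed

definition proper where
  "proper t \<longleftrightarrow> set t \<subseteq> V \<and> (\<forall>i. Suc i < length t \<longrightarrow> t ! i \<noteq> t ! Suc i)"

lemma gens_iff: "t \<in> gens V E k l \<longleftrightarrow> length t = Suc k \<and> proper t \<and> tlen V E t = l"
  by (auto simp: gens_def proper_def)

lemma proper_nth: "proper t \<Longrightarrow> i < length t \<Longrightarrow> t ! i \<in> V"
  unfolding proper_def by (auto dest: nth_mem)

lemma proper_ne: "proper t \<Longrightarrow> Suc i < length t \<Longrightarrow> t ! i \<noteq> t ! Suc i"
  unfolding proper_def by auto

lemma finite_gens: "finite (gens V E k l)"
proof -
  have "gens V E k l \<subseteq> {t. set t \<subseteq> V \<and> length t = Suc k}" by (auto simp: gens_def)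
  moreover have "finite {t. set t \<subseteq> V \<and> length t = Suc k}"
    using finite_lists_length_eq[OF finV] by simp
  ultimately show ?thesis by (rule finite_subset)
qed

lemma btw_ne: "a \<in> V \<Longrightarrow> b \<in> V \<Longrightarrow> a \<noteq> b \<Longrightarrow> btw a b c \<Longrightarrow> a \<noteq> c"
  unfolding btw_def using dist_zero by fastforce

lemma del_gens:
  assumes t: "t \<in> gens V E k l" and i: "1 \<le> i" "i < k" and ok: "okd i t"
  shows "del_at i t \<in> gens V E (k - 1) l"
proof -
  have len: "length t = Suc k" and pr: "proper t" and tl: "tlen V E t = l" using t gens_iff by auto
  have b: "btw (t ! (i - 1)) (t ! i) (t ! Suc i)" using okd_iff[of i t] ok i len by simp
  have ne: "t ! (i - 1) \<noteq> t ! Suc i"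
    using btw_ne[OF _ _ _ b] proper_nth[OF pr] proper_ne[OF pr, of "i - 1"] i len by simp
  have "set (del_at i t) \<subseteq> set t" unfolding del_at_def
    using set_take_subset set_drop_subset by fastforce
  then have sV: "set (del_at i t) \<subseteq> V" using pr unfolding proper_def by blast
  have "del_at i t ! j \<noteq> del_at i t ! Suc j" if "Suc j < length (del_at i t)" for j
  proof -
    consider "Suc j < i" | "Suc j = i" | "i \<le> j" by linarith
    then show ?thesis
    proof cases
      case 1 then show ?thesis using that i len proper_ne[OF pr, of j] by (simp add: nth_del)
    next
      case 2 then have "j = i - 1" by simp
      then show ?thesis using 2 that i len ne by (simp add: nth_del)
    next
      case 3 then show ?thesis using that i len proper_ne[OF pr, of "Suc j"] by (simp add: nth_del)
    qed
  qed
  then show ?thesis using sV len i ok tl unfolding gens_iff proper_def okd_def by auto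
qed


definition evt where "evt t j \<longleftrightarrow> 1 \<le> j \<and> j < length t \<and>
   (2 \<le> d (t ! (j - 1)) (t ! j) \<or> (Suc j < length t \<and> btw (t ! (j - 1)) (t ! j) (t ! Suc j)))"
definition fi where "fi t = (LEAST j. evt t j)"
definition isL where "isL t \<longleftrightarrow> (\<exists>j. evt t j) \<and> 2 \<le> d (t ! (fi t - 1)) (t ! fi t)"
definition insv where "insv t = ins (fi t) (nx (t ! (fi t - 1)) (t ! fi t)) t"
definition Hg where "Hg t u = (if isL t \<and> u = insv t then (-1::int) ^ fi t else 0)"

lemma fi_eq: "evt t i \<Longrightarrow> (\<And>j. j < i \<Longrightarrow> \<not> evt t j) \<Longrightarrow> fi t = i"
  unfolding fi_def by (rule Least_equality) (auto simp: not_less[symmetric])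

lemma fi_first: "\<exists>j. evt t j \<Longrightarrow> evt t (fi t) \<and> (\<forall>j<fi t. \<not> evt t j)"
  unfolding fi_def by (metis LeastI_ex not_less_Least)

lemma Lcase:
  assumes pr: "proper t" and L: "isL t"
  defines "i0 \<equiv> fi t" and "y \<equiv> nx (t ! (fi t - 1)) (t ! fi t)"
  shows "1 \<le> i0" "i0 < length t" "insv t = ins i0 y t"
   "proper (ins i0 y t)" "tlen V E (ins i0 y t) = tlen V E t"
   "\<And>m. 1 \<le> m \<Longrightarrow> m < i0 \<Longrightarrow> \<not> okd m (ins i0 y t)"
   "\<And>m. 1 \<le> m \<Longrightarrow> m < i0 \<Longrightarrow> \<not> okd m t"
   "\<And>i. i0 \<le> i \<Longrightarrow> Suc i < length t \<Longrightarrow> okd (Suc i) (ins i0 y t) \<longleftrightarrow> okd i t"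
   "\<And>i. i0 \<le> i \<Longrightarrow> Suc i < length t \<Longrightarrow> okd i t \<Longrightarrow>
       isL (del_at i t) \<and> fi (del_at i t) = i0 \<and> insv (del_at i t) = del_at (Suc i) (ins i0 y t)"
proof -
  have ex: "\<exists>j. evt t j" using L unfolding isL_def by blast
  have ev: "evt t i0" and nev: "\<And>j. j < i0 \<Longrightarrow> \<not> evt t j" using fi_first[OF ex] i0_def by auto
  show i01: "1 \<le> i0" and i0l: "i0 < length t" using ev unfolding evt_def by auto
  define a where "a = t ! (i0 - 1)"
  define b where "b = t ! i0"
  have aV: "a \<in> V" and bV: "b \<in> V" using proper_nth[OF pr] i01 i0l unfolding a_def b_def by auto
  have long: "2 \<le> d a b" using L unfolding isL_def a_def b_def i0_def by auto
  have ab: "a \<noteq> b" using long aV by auto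
  have yd: "y = nx a b" unfolding y_def a_def b_def i0_def ..
  have yV: "y \<in> V" and ay: "d a y = 1" and yb: "d y b + 1 = d a b"
    using nx[OF aV bV ab] yd by auto
  have yna: "y \<noteq> a" using ay aV by auto
  have ynb: "y \<noteq> b" using nx_btw(3)[OF aV bV ab long] yd by simp
  have bayb: "btw a y b" using ay yb unfolding btw_def by simp
  show "insv t = ins i0 y t" unfolding insv_def i0_def y_def ..
  define u where "u = ins i0 y t"
  have lu: "length u = Suc (length t)" using i0l u_def by simp
  have nu: "\<And>j. j \<le> length t \<Longrightarrow> u ! j = (if j < i0 then t ! j else if j = i0 then y else t ! (j - 1))"
    using nth_ins i0l u_def by simp
  have nsm: "\<not> btw (t ! (j - 1)) (t ! j) (t ! Suc j)" "d (t ! (j - 1)) (t ! j) < 2"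
    if "1 \<le> j" "j < i0" for j
    using nev[OF that(2)] that i0l unfolding evt_def by auto
  have "set u \<subseteq> insert y (set t)" unfolding u_def ins_def
    using set_take_subset set_drop_subset by fastforce
  then have sU: "set u \<subseteq> V" using yV pr unfolding proper_def by blast
  have "u ! j \<noteq> u ! Suc j" if "Suc j < length u" for j
  proof -
    consider "Suc j < i0" | "Suc j = i0" | "j = i0" | "i0 < j" by linarith
    then show ?thesis
    proof cases
      case 1 then show ?thesis using nu that lu proper_ne[OF pr, of j] i0l by simp
    next
      case 2 then have "j = i0 - 1" by simp
      then show ?thesis using 2 nu that lu yna unfolding a_def by simp
    next
      case 3 then show ?thesis using nu that lu ynb unfolding b_def by simp
    next
      case 4 then have "j - 1 + 1 = j" by simp
      then show ?thesis using 4 nu that lu proper_ne[OF pr, of "j - 1"] by simp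
    qed
  qed
  then show pu: "proper (ins i0 y t)" using sU unfolding proper_def u_def by blast
  have tl0: "tlen V E (del_at i0 u) + d (u ! (i0 - 1)) (u ! i0) + d (u ! i0) (u ! Suc i0)
       = tlen V E u + d (u ! (i0 - 1)) (u ! Suc i0)"
    using tlen_del[of i0 u] i01 i0l lu by simp
  have "del_at i0 u = t" using del_ins i0l u_def by simp
  moreover have "u ! (i0 - 1) = a" "u ! i0 = y" "u ! Suc i0 = b"
    using nu i01 i0l unfolding a_def b_def by auto
  ultimately show "tlen V E (ins i0 y t) = tlen V E t"
    using tl0 bayb unfolding btw_def u_def by simp
  show nokt: "\<not> okd m t" if "1 \<le> m" "m < i0" for m
    using okd_iff[of m t] that i0l nsm[OF that] by simp
  show "\<not> okd m (ins i0 y t)" if m: "1 \<le> m" "m < i0" for m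
  proof
    assume ok: "okd m (ins i0 y t)"
    have bt: "btw (u ! (m - 1)) (u ! m) (u ! Suc m)"
      using okd_iff[of m u] ok m i0l lu u_def by simp
    have e1: "u ! (m - 1) = t ! (m - 1)" "u ! m = t ! m" using nu m i0l by auto
    show False
    proof (cases "Suc m < i0")
      case True
      then show False using bt e1 nu[of "Suc m"] i0l nsm[OF m] by simp
    next
      case False
      then have sm: "Suc m = i0" using m by simp
      then have "u ! Suc m = y" "t ! m = a" "t ! Suc m = b" using nu i0l unfolding a_def b_def by auto
      then have b1: "btw (t ! (m - 1)) a y" using bt e1 by simp
      have PV: "t ! (m - 1) \<in> V" using proper_nth[OF pr] m i0l by simp
      have "d (t ! (m - 1)) b = d (t ! (m - 1)) a + d a y + d y b"
        using ptolemy_lemma[OF PV aV yV bV b1 bayb yna[symmetric]] .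
      then have "btw (t ! (m - 1)) a b" using bayb unfolding btw_def by simp
      then show False using nsm[OF m] \<open>t ! m = a\<close> \<open>t ! Suc m = b\<close> by simp
    qed
  qed
  show okeq: "okd (Suc i) (ins i0 y t) \<longleftrightarrow> okd i t" if i: "i0 \<le> i" "Suc i < length t" for i
  proof -
    have o1: "okd (Suc i) u \<longleftrightarrow> btw (u ! i) (u ! Suc i) (u ! Suc (Suc i))"
      using okd_iff[of "Suc i" u] i lu by simp
    have o2: "okd i t \<longleftrightarrow> btw (t ! (i - 1)) (t ! i) (t ! Suc i)"
      using okd_iff[of i t] i i01 by simp
    have e: "u ! Suc i = t ! i" "u ! Suc (Suc i) = t ! Suc i" using nu i by auto
    show ?thesis
    proof (cases "i = i0")
      case False
      then have "u ! i = t ! (i - 1)" using nu i by auto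
      then show ?thesis using o1 o2 e u_def by simp
    next
      case True
      define c where "c = t ! Suc i0"
      have cV: "c \<in> V" using proper_nth[OF pr] i True unfolding c_def by simp
      have ui: "u ! i = y" using nu True i by simp
      have "btw y b c \<longleftrightarrow> btw a b c"
      proof
        assume "btw y b c"
        from ptolemy_lemma[OF aV yV bV cV bayb this ynb]
        show "btw a b c" using bayb unfolding btw_def by simp
      next
        assume abc: "btw a b c"
        have "d y c \<le> d y b + d b c" using dist_tri yV bV cV by blast
        moreover have "d a c \<le> d a y + d y c" using dist_tri aV yV cV by blast
        ultimately show "btw y b c" using abc ay yb unfolding btw_def by linarith
      qed
      then show ?thesis using o1 o2 e ui True u_def unfolding a_def b_def c_def by simp
    qed
  qed
  show "isL (del_at i t) \<and> fi (del_at i t) = i0 \<and> insv (del_at i t) = del_at (Suc i) (ins i0 y t)"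
    if i: "i0 \<le> i" "Suc i < length t" and ok: "okd i t" for i
  proof -
    define t' where "t' = del_at i t"
    have lt': "length t' = length t - 1" using i t'_def by simp
    have nt': "\<And>j. j < length t - 1 \<Longrightarrow> t' ! j = (if j < i then t ! j else t ! Suc j)"
      using nth_del[of i t] i t'_def by simp
    have "i0 - 1 < i" "i0 - 1 < length t - 1" using i i01 by auto
    then have a': "t' ! (i0 - 1) = a" using nt'[of "i0 - 1"] unfolding a_def by simp
    define b' where "b' = t' ! i0"
    have bt: "btw (t ! (i - 1)) (t ! i) (t ! Suc i)" using okd_iff[of i t] i i01 ok by simp
    have nb': "nx a b' = y \<and> 2 \<le> d a b'"
    proof (cases "i0 < i")
      case True
      then have "b' = b" using nt' i unfolding b'_def b_def by simp
      then show ?thesis using yd long by simp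
    next
      case False
      then have ii: "i = i0" using i by simp
      then have bc: "b' = t ! Suc i0" using nt' i unfolding b'_def by simp
      have cV: "t ! Suc i0 \<in> V" using proper_nth[OF pr] i ii by simp
      have abc: "btw a b (t ! Suc i0)" using bt ii unfolding a_def b_def by simp
      have "nx a (t ! Suc i0) = nx a b" using nx_extend[OF aV bV cV ab abc] .
      moreover have "2 \<le> d a (t ! Suc i0)" using abc long unfolding btw_def by simp
      ultimately show ?thesis using bc yd by simp
    qed
    have evt': "evt t' i0" using nb' a' i01 i lt' unfolding evt_def b'_def by auto
    have nevt': "\<not> evt t' j" if j: "j < i0" for j
    proof
      assume e: "evt t' j"
      then have j1: "1 \<le> j" unfolding evt_def by simp
      have e1: "t' ! (j - 1) = t ! (j - 1)" "t' ! j = t ! j" using nt' j i by auto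
      have "btw (t' ! (j - 1)) (t' ! j) (t' ! Suc j)"
        using e nsm(2)[OF j1 j] e1 unfolding evt_def by auto
      then have bb: "btw (t ! (j - 1)) (t ! j) (t' ! Suc j)" using e1 by simp
      show False
      proof (cases "Suc j < i")
        case True
        then show False using bb nt' i nsm(1)[OF j1 j] by simp
      next
        case False
        then have ii: "i = i0" "Suc j = i0" using i j by auto
        then have "t' ! Suc j = t ! Suc i0" using nt' i by simp
        moreover have "t ! j = a" "t ! Suc j = b" using ii unfolding a_def b_def by auto
        ultimately have b1: "btw (t ! (j - 1)) a (t ! Suc i0)" using bb by simp
        have abc: "btw a b (t ! Suc i0)" using bt ii unfolding a_def b_def by simp
        have PV: "t ! (j - 1) \<in> V" using proper_nth[OF pr] j i0l by simp
        have cV: "t ! Suc i0 \<in> V" using proper_nth[OF pr] i ii by simp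
        have "btw (t ! (j - 1)) a b" using btw_sub[OF PV aV bV cV b1 abc] .
        then show False using nsm(1)[OF j1 j] \<open>t ! j = a\<close> \<open>t ! Suc j = b\<close> by simp
      qed
    qed
    have fi': "fi t' = i0" using fi_eq[OF evt' nevt'] .
    have isL': "isL t'" using fi' evt' nb' a' unfolding isL_def b'_def by auto
    have "insv t' = ins i0 y t'" unfolding insv_def fi' a' b'_def[symmetric] using nb' by simp
    also have "\<dots> = del_at (Suc i) (ins i0 y t)" unfolding t'_def using del_ins_swap i by simp
    finally show ?thesis using fi' isL' t'_def by simp
  qed
qed


lemma Scase:
  assumes pr: "proper t" and ex: "\<exists>j. evt t j" and nL: "\<not> isL t"
  defines "i0 \<equiv> fi t"
  shows "1 \<le> i0" "Suc i0 < length t"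
   "\<And>m. 1 \<le> m \<Longrightarrow> m < i0 \<Longrightarrow> \<not> okd m t"
   "okd i0 t" "isL (del_at i0 t)" "fi (del_at i0 t) = i0" "insv (del_at i0 t) = t"
   "\<And>i. i0 < i \<Longrightarrow> Suc i < length t \<Longrightarrow> okd i t \<Longrightarrow> \<not> isL (del_at i t)"
proof -
  have ev: "evt t i0" and nev: "\<And>j. j < i0 \<Longrightarrow> \<not> evt t j" using fi_first[OF ex] i0_def by auto
  define a where "a = t ! (i0 - 1)"
  define b where "b = t ! i0"
  have nlong: "\<not> 2 \<le> d a b" using nL ex unfolding isL_def a_def b_def i0_def by auto
  have i01: "1 \<le> i0" and i0l: "Suc i0 < length t" and abc: "btw a b (t ! Suc i0)"
    using ev nlong unfolding evt_def a_def b_def by auto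
  show "1 \<le> i0" "Suc i0 < length t" using i01 i0l by auto
  define c where "c = t ! Suc i0"
  have aV: "a \<in> V" and bV: "b \<in> V" and cV: "c \<in> V"
    using proper_nth[OF pr] i01 i0l unfolding a_def b_def c_def by auto
  have ab: "a \<noteq> b" using proper_ne[OF pr, of "i0 - 1"] i01 i0l unfolding a_def b_def by simp
  have bc: "b \<noteq> c" using proper_ne[OF pr, of i0] i0l unfolding c_def b_def by simp
  have dab: "d a b = 1" using nlong dist_zero[OF aV bV] ab by fastforce
  have nsm: "\<not> btw (t ! (j - 1)) (t ! j) (t ! Suc j)" "d (t ! (j - 1)) (t ! j) < 2"
    if "1 \<le> j" "j < i0" for j
    using nev[OF that(2)] that i0l unfolding evt_def by auto
  show "\<not> okd m t" if "1 \<le> m" "m < i0" for m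
    using okd_iff[of m t] that i0l nsm[OF that] by simp
  show ok0: "okd i0 t" using okd_iff[of i0 t] i01 i0l abc unfolding a_def b_def by simp
  define t' where "t' = del_at i0 t"
  have lt': "length t' = length t - 1" using i0l t'_def by simp
  have nt': "\<And>j. j < length t - 1 \<Longrightarrow> t' ! j = (if j < i0 then t ! j else t ! Suc j)"
    using nth_del[of i0 t] i0l t'_def by simp
  have "i0 - 1 < i0" "i0 - 1 < length t - 1" using i0l i01 by auto
  then have a': "t' ! (i0 - 1) = a" using nt'[of "i0 - 1"] unfolding a_def by simp
  have c': "t' ! i0 = c" using nt'[of i0] i0l unfolding c_def by simp
  have dac: "d a c = d a b + d b c" using abc unfolding btw_def c_def by simp
  have "d b c \<noteq> 0" using dist_zero[OF bV cV] bc by auto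
  then have evt': "evt t' i0" using a' c' dac dab i01 i0l lt' unfolding evt_def by auto
  have nevt': "\<not> evt t' j" if j: "j < i0" for j
  proof
    assume e: "evt t' j"
    then have j1: "1 \<le> j" unfolding evt_def by simp
    have e1: "t' ! (j - 1) = t ! (j - 1)" "t' ! j = t ! j" using nt' j i0l by auto
    have "btw (t' ! (j - 1)) (t' ! j) (t' ! Suc j)"
      using e nsm(2)[OF j1 j] e1 unfolding evt_def by auto
    then have bb: "btw (t ! (j - 1)) (t ! j) (t' ! Suc j)" using e1 by simp
    show False
    proof (cases "Suc j < i0")
      case True
      then show False using bb nt' i0l nsm(1)[OF j1 j] by simp
    next
      case False
      then have ii: "Suc j = i0" using j by auto
      then have "t' ! Suc j = c" using c' by simp
      moreover have "t ! j = a" "t ! Suc j = b" using ii unfolding a_def b_def by auto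
      ultimately have b1: "btw (t ! (j - 1)) a c" using bb by simp
      have PV: "t ! (j - 1) \<in> V" using proper_nth[OF pr] j i0l by simp
      have "btw (t ! (j - 1)) a b" using btw_sub[OF PV aV bV cV b1] abc unfolding c_def by simp
      then show False using nsm(1)[OF j1 j] \<open>t ! j = a\<close> \<open>t ! Suc j = b\<close> by simp
    qed
  qed
  have fi': "fi t' = i0" using fi_eq[OF evt' nevt'] .
  show "isL (del_at i0 t)" using fi' evt' a' c' dac dab \<open>d b c \<noteq> 0\<close> unfolding isL_def t'_def[symmetric] by auto
  show "fi (del_at i0 t) = i0" using fi' t'_def by simp
  have "nx a c = b" using nx_edge[OF aV bV cV dab] abc unfolding c_def by simp
  then show "insv (del_at i0 t) = t"
    unfolding insv_def t'_def[symmetric] fi' a' c' b_def using ins_del[of i0 t] i0l t'_def by simp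
  show "\<not> isL (del_at i t)" if i: "i0 < i" "Suc i < length t" and ok: "okd i t" for i
  proof -
    define t'' where "t'' = del_at i t"
    have nt'': "\<And>j. j < length t - 1 \<Longrightarrow> t'' ! j = (if j < i then t ! j else t ! Suc j)"
      using nth_del[of i t] i t''_def by simp
    have lt'': "length t'' = length t - 1" using i t''_def by simp
    have "i0 - 1 < i" "i0 - 1 < length t - 1" using i i01 by auto
    then have a'': "t'' ! (i0 - 1) = a" using nt''[of "i0 - 1"] unfolding a_def by simp
    have b'': "t'' ! i0 = b" using nt''[of i0] i unfolding b_def by simp
    have bt: "btw (t ! (i - 1)) (t ! i) (t ! Suc i)" using okd_iff[of i t] i i01 ok by simp
    have sm: "btw a b (t'' ! Suc i0)"
    proof (cases "Suc i0 < i")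
      case True
      then have "t'' ! Suc i0 = c" using nt'' i unfolding c_def by simp
      then show ?thesis using abc c_def by simp
    next
      case False
      then have ii: "i = Suc i0" using i by simp
      then have e: "t'' ! Suc i0 = t ! Suc (Suc i0)" using nt'' i by simp
      have eV: "t ! Suc (Suc i0) \<in> V" using proper_nth[OF pr] i ii by simp
      have bce: "btw b c (t ! Suc (Suc i0))" using bt ii unfolding b_def c_def by simp
      have "d a (t ! Suc (Suc i0)) = d a b + d b c + d c (t ! Suc (Suc i0))"
        using ptolemy_lemma[OF aV bV cV eV _ bce bc] abc unfolding c_def by simp
      then show ?thesis using e bce unfolding btw_def by simp
    qed
    have evt'': "evt t'' i0" using sm a'' b'' i01 i lt'' unfolding evt_def by auto
    have nevt'': "\<not> evt t'' j" if j: "j < i0" for j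
    proof -
      have "j - 1 < length t - 1" "j < length t - 1" "Suc j < length t - 1" "j - 1 < i" "j < i" "Suc j < i"
        using j i by auto
      then have "t'' ! (j - 1) = t ! (j - 1)" "t'' ! j = t ! j" "t'' ! Suc j = t ! Suc j"
        using nt'' by auto
      moreover have "\<not> evt t j" using nev j .
      ultimately show ?thesis using lt'' j i unfolding evt_def by auto
    qed
    have "fi t'' = i0" using fi_eq[OF evt'' nevt''] .
    then show ?thesis using a'' b'' nlong unfolding isL_def t''_def[symmetric] by simp
  qed
qed

lemma hasev:
  assumes t: "t \<in> gens V E k l" and kl: "k \<noteq> l"
  shows "\<exists>j. evt t j"
proof (rule ccontr)
  assume "\<not> (\<exists>j. evt t j)"
  then have ne: "\<And>j. \<not> evt t j" by blast
  have len: "length t = Suc k" and pr: "proper t" and tl: "tlen V E t = l" using t gens_iff by auto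
  have "d (t ! i) (t ! Suc i) = 1" if "i < length t - 1" for i
  proof -
    have "d (t ! i) (t ! Suc i) < 2" using ne[of "Suc i"] that unfolding evt_def by auto
    moreover have "t ! i \<noteq> t ! Suc i" using proper_ne[OF pr] that by simp
    moreover have "t ! i \<in> V" "t ! Suc i \<in> V" using proper_nth[OF pr] that by auto
    ultimately show ?thesis using dist_zero by fastforce
  qed
  then have "tlen V E t = (\<Sum>i<length t - 1. 1)" unfolding tlen_def by (intro sum.cong) auto
  then show False using len tl kl by simp
qed


lemma m1sq: "(-1::int) ^ i * (-1) ^ i = 1"
  by (simp flip: power_add)

definition Dg where "Dg k t s = (\<Sum>i\<in>{1..<k}. (-1::int) ^ i * (if del_at i t = s \<and> okd i t then 1 else 0))"

lemma mbdry_Dg: "mbdry V E k l c s = (\<Sum>t\<in>gens V E k l. c t * Dg k t s)"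
  unfolding mbdry_def Dg_def okd_def ..

lemma insv_gens:
  assumes t: "t \<in> gens V E k l" and L: "isL t"
  shows "insv t \<in> gens V E (Suc k) l"
  using Lcase[OF _ L] t unfolding gens_iff by auto

lemma sumA:
  assumes t: "t \<in> gens V E k l"
  shows "(\<Sum>u\<in>gens V E (Suc k) l. Hg t u * X u) = (if isL t then (-1) ^ fi t * X (insv t) else 0)"
proof (cases "isL t")
  case True
  have "(\<Sum>u\<in>gens V E (Suc k) l. Hg t u * X u)
     = (\<Sum>u\<in>gens V E (Suc k) l. if u = insv t then (-1) ^ fi t * X u else 0)"
    by (intro sum.cong) (auto simp: Hg_def True)
  also have "\<dots> = (-1) ^ fi t * X (insv t)" using finite_gens insv_gens[OF t True] by simp
  finally show ?thesis using True by simp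
qed (simp add: Hg_def)

lemma sumB:
  assumes t: "t \<in> gens V E k l"
  shows "(\<Sum>r\<in>gens V E (k - 1) l. Dg k t r * Y r)
       = (\<Sum>i\<in>{1..<k}. (-1) ^ i * (if okd i t then Y (del_at i t) else 0))"
proof -
  have "(\<Sum>r\<in>gens V E (k - 1) l. Dg k t r * Y r)
     = (\<Sum>r\<in>gens V E (k - 1) l. \<Sum>i\<in>{1..<k}. (if del_at i t = r then (-1) ^ i * (if okd i t then Y r else 0) else 0))"
    unfolding Dg_def sum_distrib_right by (intro sum.cong refl) auto
  also have "\<dots> = (\<Sum>i\<in>{1..<k}. \<Sum>r\<in>gens V E (k - 1) l. (if del_at i t = r then (-1) ^ i * (if okd i t then Y r else 0) else 0))"
    by (rule sum.swap)
  also have "\<dots> = (\<Sum>i\<in>{1..<k}. (-1) ^ i * (if okd i t then Y (del_at i t) else 0))"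
  proof (intro sum.cong refl)
    fix i assume i: "i \<in> {1..<k}"
    show "(\<Sum>r\<in>gens V E (k - 1) l. (if del_at i t = r then (-1) ^ i * (if okd i t then Y r else 0) else 0))
        = (-1) ^ i * (if okd i t then Y (del_at i t) else 0)"
      using finite_gens del_gens[OF t, of i] i by auto
  qed
  finally show ?thesis .
qed

lemma key:
  assumes t: "t \<in> gens V E k l" and kl: "k \<noteq> l"
  shows "(\<Sum>u\<in>gens V E (Suc k) l. Hg t u * Dg (Suc k) u s)
       + (\<Sum>r\<in>gens V E (k - 1) l. Dg k t r * Hg r s) = (if t = s then 1 else 0)"
proof -
  have len: "length t = Suc k" and pr: "proper t" using t gens_iff by auto
  have ex: "\<exists>j. evt t j" using hasev[OF t kl] .
  define g where "g i = (-1::int) ^ i * (if okd i t then Hg (del_at i t) s else 0)" for i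
  have B: "(\<Sum>r\<in>gens V E (k - 1) l. Dg k t r * Hg r s) = (\<Sum>i\<in>{1..<k}. g i)"
    using sumB[OF t, of "\<lambda>r. Hg r s"] unfolding g_def .
  show ?thesis
  proof (cases "isL t")
    case True
    define i0 where "i0 = fi t"
    define y where "y = nx (t ! (fi t - 1)) (t ! fi t)"
    define u0 where "u0 = ins i0 y t"
    note LC = Lcase[OF pr True, folded i0_def y_def, folded u0_def]
    have i01: "1 \<le> i0" and i0k: "i0 \<le> k" using LC(1,2) len by auto
    define f where "f m = (-1::int) ^ m * (if del_at m u0 = s \<and> okd m u0 then 1 else 0)" for m
    have A: "(\<Sum>u\<in>gens V E (Suc k) l. Hg t u * Dg (Suc k) u s) = (-1) ^ i0 * (\<Sum>m\<in>{1..<Suc k}. f m)"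
      using sumA[OF t, of "\<lambda>u. Dg (Suc k) u s"] True LC(3) unfolding Dg_def f_def i0_def u0_def by simp
    have f0: "f m = 0" if "1 \<le> m" "m < i0" for m using LC(6)[OF that] unfolding f_def by simp
    have g0: "g m = 0" if "1 \<le> m" "m < i0" for m using LC(7)[OF that] unfolding g_def by simp
    have dt: "del_at i0 u0 = t" using del_ins LC(2) unfolding u0_def by simp
    have fi0: "(-1) ^ i0 * f i0 = (if t = s then 1 else 0)"
      using dt m1sq[of i0] LC(5) unfolding f_def okd_def u0_def by (auto simp: dt[unfolded u0_def])
    have fg: "(-1) ^ i0 * f (Suc i) + g i = 0" if i: "i0 \<le> i" "i < k" for i
    proof (cases "okd i t")
      case True
      have si: "Suc i < length t" using i len by simp
      have o: "okd (Suc i) u0" using LC(8)[OF i(1) si] True by simp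
      have h: "isL (del_at i t) \<and> fi (del_at i t) = i0 \<and> insv (del_at i t) = del_at (Suc i) u0"
        using LC(9)[OF i(1) si True] .
      have "g i = (-1) ^ i * (if s = del_at (Suc i) u0 then (-1) ^ i0 else 0)"
        unfolding g_def Hg_def using True h by auto
      moreover have "f (Suc i) = (-1) ^ Suc i * (if del_at (Suc i) u0 = s then 1 else 0)"
        unfolding f_def using o by simp
      ultimately show ?thesis by auto
    next
      case False
      have si: "Suc i < length t" using i len by simp
      have o: "\<not> okd (Suc i) u0" using LC(8)[OF i(1) si] False by simp
      then show ?thesis unfolding f_def g_def using False by simp
    qed
    have S1: "(\<Sum>m\<in>{1..<Suc k}. f m) = f i0 + (\<Sum>i\<in>{i0..<k}. f (Suc i))"
    proof -
      have "(\<Sum>m\<in>{1..<Suc k}. f m) = (\<Sum>m\<in>{1..<i0}. f m) + (\<Sum>m\<in>{i0..<Suc k}. f m)"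
        using sum.atLeastLessThan_concat[of 1 i0 "Suc k" f] i01 i0k by simp
      also have "(\<Sum>m\<in>{1..<i0}. f m) = 0" using f0 by simp
      also have "(\<Sum>m\<in>{i0..<Suc k}. f m) = f i0 + (\<Sum>m\<in>{Suc i0..<Suc k}. f m)"
        using sum.atLeast_Suc_lessThan[of i0 "Suc k" f] i0k by simp
      also have "(\<Sum>m\<in>{Suc i0..<Suc k}. f m) = (\<Sum>i\<in>{i0..<k}. f (Suc i))"
        by (rule sum.shift_bounds_Suc_ivl)
      finally show ?thesis by simp
    qed
    have S2: "(\<Sum>i\<in>{1..<k}. g i) = (\<Sum>i\<in>{i0..<k}. g i)"
    proof (cases "i0 < k")
      case True
      have "(\<Sum>i\<in>{1..<k}. g i) = (\<Sum>i\<in>{1..<i0}. g i) + (\<Sum>i\<in>{i0..<k}. g i)"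
        using sum.atLeastLessThan_concat[of 1 i0 k g] i01 True by simp
      then show ?thesis using g0 by simp
    next
      case False
      then have "i0 = k" using i0k by simp
      then show ?thesis using g0 by simp
    qed
    have "(-1) ^ i0 * (\<Sum>m\<in>{1..<Suc k}. f m) + (\<Sum>i\<in>{1..<k}. g i)
        = (-1) ^ i0 * f i0 + (\<Sum>i\<in>{i0..<k}. (-1) ^ i0 * f (Suc i) + g i)"
      unfolding S1 S2 by (simp add: algebra_simps sum.distrib sum_distrib_left)
    also have "\<dots> = (if t = s then 1 else 0)" using fi0 fg by simp
    finally show ?thesis using A B by simp
  next
    case False
    note SC = Scase[OF pr ex False]
    define i0 where "i0 = fi t"
    have i01: "1 \<le> i0" and i0k: "i0 < k" using SC(1,2) len i0_def by auto
    have A: "(\<Sum>u\<in>gens V E (Suc k) l. Hg t u * Dg (Suc k) u s) = 0"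
      using sumA[OF t] False by simp
    have gi0: "g i0 = (if t = s then 1 else 0)"
      using SC(4,5,6,7) m1sq[of i0] unfolding g_def Hg_def i0_def by auto
    have gz: "g i = 0" if "i \<in> {1..<k}" "i \<noteq> i0" for i
    proof (cases "i < i0")
      case True
      then show ?thesis using SC(3)[of i] that unfolding g_def i0_def by simp
    next
      case False
      then have "i0 < i" "Suc i < length t" using that len by auto
      then show ?thesis using SC(8)[of i] unfolding g_def Hg_def i0_def by auto
    qed
    have "(\<Sum>i\<in>{1..<k}. g i) = g i0 + (\<Sum>i\<in>{1..<k} - {i0}. g i)"
      using sum.remove[of "{1..<k}" i0 g] i01 i0k by simp
    also have "(\<Sum>i\<in>{1..<k} - {i0}. g i) = 0" using gz by simp
    finally show ?thesis using A B gi0 by simp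
  qed
qed

definition Hc where "Hc k l c u = (\<Sum>t\<in>gens V E k l. c t * Hg t u)"

lemma MH0:
  assumes kl: "k \<noteq> l"
  shows "MH_zero V E k l"
  unfolding MH_zero_def
proof (intro allI impI, elim conjE)
  fix c assume mc: "mchain V E k l c" and cyc: "mbdry V E k l c = (\<lambda>_. 0)"
  have mb: "mchain V E (Suc k) l (Hc k l c)"
    unfolding mchain_def
  proof (intro allI impI)
    fix u assume "Hc k l c u \<noteq> 0"
    then obtain t where t: "t \<in> gens V E k l" "c t * Hg t u \<noteq> 0"
      unfolding Hc_def by (rule sum.not_neutral_contains_not_neutral)
    then have "isL t" "u = insv t" unfolding Hg_def by (auto split: if_splits)
    then show "u \<in> gens V E (Suc k) l" using insv_gens t(1) by simp
  qed
  have "mbdry V E (Suc k) l (Hc k l c) = c"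
  proof
    fix s
    have "mbdry V E (Suc k) l (Hc k l c) s
       = (\<Sum>u\<in>gens V E (Suc k) l. \<Sum>t\<in>gens V E k l. c t * (Hg t u * Dg (Suc k) u s))"
      unfolding mbdry_Dg Hc_def sum_distrib_right by (simp add: mult.assoc)
    also have "\<dots> = (\<Sum>t\<in>gens V E k l. c t * (\<Sum>u\<in>gens V E (Suc k) l. Hg t u * Dg (Suc k) u s))"
      by (subst sum.swap) (simp add: sum_distrib_left)
    also have "\<dots> = (\<Sum>t\<in>gens V E k l. c t * ((if t = s then 1 else 0)
          - (\<Sum>r\<in>gens V E (k - 1) l. Dg k t r * Hg r s)))"
      by (intro sum.cong refl) (use key[OF _ kl] in \<open>simp add: eq_diff_eq\<close>)
    also have "\<dots> = (\<Sum>t\<in>gens V E k l. c t * (if t = s then 1 else 0))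
          - (\<Sum>r\<in>gens V E (k - 1) l. (\<Sum>t\<in>gens V E k l. c t * Dg k t r) * Hg r s)"
      by (simp add: right_diff_distrib sum_subtractf sum_distrib_left sum_distrib_right mult.assoc
           sum.swap[of _ "gens V E k l"])
    also have "(\<Sum>r\<in>gens V E (k - 1) l. (\<Sum>t\<in>gens V E k l. c t * Dg k t r) * Hg r s) = 0"
      using cyc unfolding fun_eq_iff mbdry_Dg by simp
    also have "(\<Sum>t\<in>gens V E k l. c t * (if t = s then 1 else 0)) = (\<Sum>t\<in>gens V E k l. if t = s then c t else 0)"
      by (intro sum.cong) auto
    also have "(\<Sum>t\<in>gens V E k l. if t = s then c t else 0) = c s"
      using finite_gens mc unfolding mchain_def by auto
    finally show "mbdry V E (Suc k) l (Hc k l c) s = c s" by simp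
  qed
  then show "\<exists>b. mchain V E (Suc k) l b \<and> mbdry V E (Suc k) l b = c" using mb by blast
qed

end

theorem theoremB3:
  fixes V :: "'a set" and E :: "'a \<Rightarrow> 'a \<Rightarrow> bool"
  assumes "finite V" and "simple_graph V E" and "connected_graph V E"
    and "geodetic V E" and "ptolemaic V E"
  shows "diagonal V E"
proof -
  interpret GG V E using assms by unfold_locales
  show ?thesis unfolding diagonal_def using MH0 by blast
qed

end
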